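(* Let $G\subset \mathrm U(1,n+1)_{\mathbb Cp}$ be a Lie subgroup that is weakly irreducible, i.e. does not preserve any proper nonzero non-degenerate complex subspace of $\mathbb C^{1,n+1}$. Then $\Gamma(G)\subset\mathrm{Sim}\,\mathbb C^n$ does not preserve any proper complex affine subspace of $\mathbb C^n$. Consequently, if $\Gamma(G)$ preserves a proper real affine subspace $L\subset\mathbb C^n$, then the minimal complex affine subspace of $\mathbb C^n$ containing $L$ is $\mathbb C^n$.
   Context: $\mathbb C^{1,n+1}$ has a Witt basis $p,e_1,\dots,e_n,q$ (only nonzero values $h(p,q)=h(q,p)=1$, $h(e_j,e_j)=1$), $\mathbb C^n=\mathrm{span}_{\mathbb C}\{e_1,\dots,e_n\}$ with its Hermitian metric. $\mathrm U(1,n+1)_{\mathbb Cp}$ is the subgroup of $\mathrm U(1,n+1)$ preserving the line $\mathbb Cp$; it is generated by the matrices (in the basis $p,e_1,\dots,e_n,q$) $\begin{pmatrix} e^a&0&0\\0&A&0\\0&0&e^{-\bar a}\end{pmatrix}$ ($a\in\mathbb C$, $A\in\mathrm U(n)$) and $\begin{pmatrix} 1&-\bar Z^t& -\tfrac12\bar Z^tZ+ic\\0&E_n&Z\\0&0&1\end{pmatrix}$ ($Z\in\mathbb C^n$, $c\in\mathbb R$). $\mathrm{Sim}\,\mathbb C^n=(\mathbb R^*\cdot\mathrm U(n))\ltimes\mathbb C^n$ is the group of similarity transformations of $\mathbb C^n$, and $\Gamma:\mathrm U(1,n+1)_{\mathbb Cp}\to\mathrm{Sim}\,\mathbb C^n$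 is the homomorphism sending the first type of generator to the linear map $e^{\bar a}A$ and the second to the translation by $Z$ (geometrically, it is induced by the action on the boundary of complex hyperbolic space minus the point $\mathbb Cp$, i.e. on the Heisenberg space $\mathbb C^n\oplus\mathbb R$, followed by projection to $\mathbb C^n$). *)

theory Defs
  imports "Jordan_Normal_Form.Matrix"
begin

text \<open>C^{1,n+1} is modelled as complex vectors of dimension n+2 with coordinates
 w.r.t. the Witt basis: index 0 = p, indices 1..n = e_1..e_n, index n+1 = q.\<close>

definition hform :: "nat \<Rightarrow> complex vec \<Rightarrow> complex vec \<Rightarrow> complex" where
  "hform n u v = u $ 0 * cnj (v $ (n+1)) + u $ (n+1) * cnj (v $ 0)
                 + (\<Sum>j\<in>{1..n}. u $ j * cnj (v $ j))"

definition pvec :: "nat \<Rightarrow> complex vec" where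
  "pvec n = unit_vec (n+2) 0"

definition U1n :: "nat \<Rightarrow> complex mat set" where
  "U1n n = {M \<in> carrier_mat (n+2) (n+2).
      \<forall>u\<in>carrier_vec (n+2). \<forall>v\<in>carrier_vec (n+2). hform n (M *\<^sub>v u) (M *\<^sub>v v) = hform n u v}"

definition U1n_p :: "nat \<Rightarrow> complex mat set" where
  "U1n_p n = {M \<in> U1n n. \<exists>c::complex. M *\<^sub>v pvec n = c \<cdot>\<^sub>v pvec n}"

definition is_subgroup_of :: "nat \<Rightarrow> complex mat set \<Rightarrow> complex mat set \<Rightarrow> bool" where
  "is_subgroup_of n G H \<longleftrightarrow> G \<subseteq> H \<and> 1\<^sub>m (n+2) \<in> G \<and>
      (\<forall>g\<in>G. \<forall>h\<in>G. g * h \<in> G) \<and> (\<forall>g\<in>G. \<exists>h\<in>G. g * h = 1\<^sub>m (n+2))"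

definition complex_subspace :: "nat \<Rightarrow> complex vec set \<Rightarrow> bool" where
  "complex_subspace m W \<longleftrightarrow> W \<subseteq> carrier_vec m \<and> 0\<^sub>v m \<in> W \<and>
      (\<forall>u\<in>W. \<forall>v\<in>W. u + v \<in> W) \<and> (\<forall>c::complex. \<forall>u\<in>W. c \<cdot>\<^sub>v u \<in> W)"

definition real_subspace :: "nat \<Rightarrow> complex vec set \<Rightarrow> bool" where
  "real_subspace m W \<longleftrightarrow> W \<subseteq> carrier_vec m \<and> 0\<^sub>v m \<in> W \<and>
      (\<forall>u\<in>W. \<forall>v\<in>W. u + v \<in> W) \<and> (\<forall>c::real. \<forall>u\<in>W. complex_of_real c \<cdot>\<^sub>v u \<in> W)"

definition nondegenerate :: "nat \<Rightarrow> complex vec set \<Rightarrow> bool" where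
  "nondegenerate n W \<longleftrightarrow> (\<forall>u\<in>W. (\<forall>v\<in>W. hform n u v = 0) \<longrightarrow> u = 0\<^sub>v (n+2))"

definition preserves_lin :: "complex mat set \<Rightarrow> complex vec set \<Rightarrow> bool" where
  "preserves_lin G W \<longleftrightarrow> (\<forall>g\<in>G. (\<lambda>w. g *\<^sub>v w) ` W = W)"

definition weakly_irreducible :: "nat \<Rightarrow> complex mat set \<Rightarrow> bool" where
  "weakly_irreducible n G \<longleftrightarrow>
     \<not> (\<exists>W. complex_subspace (n+2) W \<and> W \<noteq> {0\<^sub>v (n+2)} \<and> W \<noteq> carrier_vec (n+2)
            \<and> nondegenerate n W \<and> preserves_lin G W)"

definition complex_affine :: "nat \<Rightarrow> complex vec set \<Rightarrow> bool" where
  "complex_affine m S \<longleftrightarrow> (\<exists>x0\<in>carrier_vec m. \<exists>W. complex_subspace m W \<and> S = (\<lambda>w. x0 + w) ` W)"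

definition real_affine :: "nat \<Rightarrow> complex vec set \<Rightarrow> bool" where
  "real_affine m S \<longleftrightarrow> (\<exists>x0\<in>carrier_vec m. \<exists>W. real_subspace m W \<and> S = (\<lambda>w. x0 + w) ` W)"

definition complex_affine_hull :: "nat \<Rightarrow> complex vec set \<Rightarrow> complex vec set" where
  "complex_affine_hull m L = \<Inter> {S. complex_affine m S \<and> L \<subseteq> S}"

text \<open>For
 M = T(Z,c) D(a,A) one has Gamma(M) x = e^{conj a} A x + Z; this is obtained by applying M
 to the vector (0, x, 1), taking the C^n-part and dividing by the q-coordinate
 M_{n+1,n+1} = e^{-conj a}.\<close>
definition Gamma :: "nat \<Rightarrow> complex mat \<Rightarrow> complex vec \<Rightarrow> complex vec" where
  "Gamma n M x =
     (let w = M *\<^sub>v vec (n+2) (\<lambda>i. if i = 0 then 0 else if i \<le> n then x $ (i - 1) else 1)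
      in (1 / M $$ (n+1, n+1)) \<cdot>\<^sub>v vec n (\<lambda>j. w $ (j+1)))"

definition preserves_aff :: "(complex vec \<Rightarrow> complex vec) set \<Rightarrow> complex vec set \<Rightarrow> bool" where
  "preserves_aff F S \<longleftrightarrow> (\<forall>f\<in>F. f ` S = S)"

end

theory Submission
  imports Defs
begin


lemma sum_split_n2:
  fixes f :: "nat \<Rightarrow> 'a::comm_monoid_add"
  shows "(\<Sum>i\<in>{0..<n+2}. f i) = f 0 + (\<Sum>i<n. f (i+1)) + f (n+1)"
proof -
  have "(\<Sum>i\<in>{0..<n+2}. f i) = (\<Sum>i<Suc (Suc n). f i)" by (simp add: atLeast0LessThan)
  also have "\<dots> = (\<Sum>i<Suc n. f i) + f (n+1)" by simp
  also have "(\<Sum>i<Suc n. f i) = f 0 + (\<Sum>i<n. f (Suc i))" by (rule sum.lessThan_Suc_shift)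
  finally show ?thesis by (simp add: add.commute add.left_commute)
qed

lemma mv_split:
  assumes "M \<in> carrier_mat (n+2) (n+2)" "u \<in> carrier_vec (n+2)" "r < n+2"
  shows "(M *\<^sub>v u) $ r = M $$ (r,0) * u $ 0 + (\<Sum>i<n. M $$ (r,i+1) * u $ (i+1)) + M $$ (r,n+1) * u $ (n+1)"
proof -
  have "(M *\<^sub>v u) $ r = (\<Sum>i\<in>{0..<n+2}. M $$ (r,i) * u $ i)"
    using assms by (simp add: scalar_prod_def row_def)
  then show ?thesis by (simp only: sum_split_n2)
qed

definition emb :: "nat \<Rightarrow> complex vec \<Rightarrow> complex vec" where
  "emb n x = vec (n+2) (\<lambda>i. if i = 0 then 0 else if i \<le> n then x $ (i - 1) else 1)"

lemma Gamma_comp: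
  assumes "M \<in> carrier_mat (n+2) (n+2)" "j < n"
  shows "Gamma n M x $ j = ((\<Sum>i<n. M $$ (j+1,i+1) * x $ i) + M $$ (j+1,n+1)) / M $$ (n+1,n+1)"
proof -
  have "Gamma n M x $ j = (1 / M $$ (n+1, n+1)) * (M *\<^sub>v emb n x) $ (j+1)"
    using assms unfolding Gamma_def emb_def Let_def by simp
  also have "(M *\<^sub>v emb n x) $ (j+1) = (\<Sum>i<n. M $$ (j+1,i+1) * x $ i) + M $$ (j+1,n+1)"
    using assms by (subst mv_split[of M n]) (auto simp: emb_def)
  finally show ?thesis by simp
qed

lemma Gamma_dim: "M \<in> carrier_mat (n+2) (n+2) \<Longrightarrow> Gamma n M x \<in> carrier_vec n"
  unfolding Gamma_def Let_def by simp

lemma hform_p: "hform n x (c \<cdot>\<^sub>v pvec n) = x $ (n+1) * cnj c"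
proof -
  have "(\<Sum>j\<in>{1..n}. x $ j * cnj ((c \<cdot>\<^sub>v pvec n) $ j)) = 0"
    by (rule sum.neutral) (auto simp: pvec_def)
  then show ?thesis unfolding hform_def by (simp add: pvec_def)
qed


lemma U1n_p_struct:
  assumes "M \<in> U1n_p n"
  shows "M \<in> carrier_mat (n+2) (n+2)" "M $$ (n+1,n+1) \<noteq> 0"
    "\<And>u. u \<in> carrier_vec (n+2) \<Longrightarrow> (M *\<^sub>v u) $ (n+1) = M $$ (n+1,n+1) * u $ (n+1)"
    "\<And>j. j < n \<Longrightarrow> M $$ (j+1,0) = 0"
proof -
  from assms obtain c where M: "M \<in> U1n n" and c: "M *\<^sub>v pvec n = c \<cdot>\<^sub>v pvec n"
    unfolding U1n_p_def by auto
  show Mc: "M \<in> carrier_mat (n+2) (n+2)" using M unfolding U1n_def by auto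
  have pc: "pvec n \<in> carrier_vec (n+2)" unfolding pvec_def by simp
  have key: "(M *\<^sub>v u) $ (n+1) * cnj c = u $ (n+1)" if u: "u \<in> carrier_vec (n+2)" for u
  proof -
    have "hform n (M *\<^sub>v u) (M *\<^sub>v pvec n) = hform n u (pvec n)"
      using M u pc unfolding U1n_def by auto
    then show ?thesis using c hform_p[of n u 1] hform_p[of n "M *\<^sub>v u" c] by simp
  qed
  define q :: "complex vec" where "q = unit_vec (n+2) (n+1)"
  have qc: "q \<in> carrier_vec (n+2)" unfolding q_def by simp
  have "(M *\<^sub>v q) $ (n+1) = M $$ (n+1,0) * q $ 0 + (\<Sum>i<n. M $$ (n+1,i+1) * q $ (i+1)) + M $$ (n+1,n+1) * q $ (n+1)"
    by (rule mv_split[OF Mc qc]) simp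
  moreover have "(\<Sum>i<n. M $$ (n+1,i+1) * q $ (i+1)) = 0"
    by (rule sum.neutral) (auto simp: q_def)
  ultimately have Mq: "(M *\<^sub>v q) $ (n+1) = M $$ (n+1,n+1)" by (simp add: q_def)
  have 1: "M $$ (n+1,n+1) * cnj c = 1" using key[OF qc] Mq by (simp add: q_def)
  then show "M $$ (n+1,n+1) \<noteq> 0" by auto
  show "(M *\<^sub>v u) $ (n+1) = M $$ (n+1,n+1) * u $ (n+1)" if u: "u \<in> carrier_vec (n+2)" for u
  proof -
    have "cnj c \<noteq> 0" using 1 by auto
    then have "(M *\<^sub>v u) $ (n+1) = u $ (n+1) / cnj c" using key[OF u] by (simp add: field_simps)
    also have "\<dots> = M $$ (n+1,n+1) * u $ (n+1)" using 1 \<open>cnj c \<noteq> 0\<close>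
      by (simp add: field_simps)
    finally show ?thesis .
  qed
  show "M $$ (j+1,0) = 0" if j: "j < n" for j
  proof -
    have "(M *\<^sub>v pvec n) $ (j+1) = M $$ (j+1,0) * pvec n $ 0 + (\<Sum>i<n. M $$ (j+1,i+1) * pvec n $ (i+1)) + M $$ (j+1,n+1) * pvec n $ (n+1)"
      by (rule mv_split[OF Mc pc]) (use j in simp)
    moreover have "(\<Sum>i<n. M $$ (j+1,i+1) * pvec n $ (i+1)) = 0"
      by (rule sum.neutral) (auto simp: pvec_def)
    ultimately have "(M *\<^sub>v pvec n) $ (j+1) = M $$ (j+1,0)" by (simp add: pvec_def)
    then show ?thesis using c j by (simp add: pvec_def)
  qed
qed



definition proj :: "nat \<Rightarrow> complex vec \<Rightarrow> complex vec" where
  "proj n u = vec n (\<lambda>j. u $ (j+1))"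

definition iota :: "nat \<Rightarrow> complex vec \<Rightarrow> complex vec" where
  "iota n y = vec (n+2) (\<lambda>i. if i = 0 then 0 else if i \<le> n then y $ (i - 1) else 0)"

lemma sum_cnj_zero:
  fixes z :: "nat \<Rightarrow> complex"
  assumes "finite A" "(\<Sum>j\<in>A. z j * cnj (z j)) = 0" "j \<in> A"
  shows "z j = 0"
proof -
  have "(\<Sum>j\<in>A. z j * cnj (z j)) = complex_of_real (\<Sum>j\<in>A. (cmod (z j))^2)"
    by (simp only: complex_norm_square of_real_sum)
  with assms(2) have "complex_of_real (\<Sum>j\<in>A. (cmod (z j))^2) = 0" by metis
  then have "(\<Sum>j\<in>A. (cmod (z j))^2) = 0" by (simp only: of_real_eq_0_iff)
  with assms have "(cmod (z j))^2 = 0" by (simp add: sum_nonneg_eq_0_iff)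
  then show ?thesis by simp
qed

lemma hform_p1: "hform n x (pvec n) = x $ (n+1)"
proof -
  have "(\<Sum>j\<in>{1..n}. x $ j * cnj (pvec n $ j)) = 0"
    by (rule sum.neutral) (auto simp: pvec_def)
  then show ?thesis unfolding hform_def by (simp add: pvec_def)
qed

lemma cs_add: "complex_subspace m W \<Longrightarrow> u \<in> W \<Longrightarrow> v \<in> W \<Longrightarrow> u + v \<in> W"
  unfolding complex_subspace_def by auto
lemma cs_smult: "complex_subspace m W \<Longrightarrow> u \<in> W \<Longrightarrow> c \<cdot>\<^sub>v u \<in> W"
  unfolding complex_subspace_def by auto
lemma cs_zero: "complex_subspace m W \<Longrightarrow> 0\<^sub>v m \<in> W"
  unfolding complex_subspace_def by auto
lemma cs_carrier: "complex_subspace m W \<Longrightarrow> u \<in> W \<Longrightarrow> u \<in> carrier_vec m"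
  unfolding complex_subspace_def by auto



lemma close_U:
  assumes g: "g \<in> U1n_p n"
    and x0: "x0 \<in> carrier_vec n" and W: "complex_subspace n W"
    and pres: "Gamma n g ` ((\<lambda>w. x0 + w) ` W) = (\<lambda>w. x0 + w) ` W"
    and u: "u \<in> carrier_vec (n+2)" "proj n u + (- u $ (n+1)) \<cdot>\<^sub>v x0 \<in> W"
  shows "proj n (g *\<^sub>v u) + (- (g *\<^sub>v u) $ (n+1)) \<cdot>\<^sub>v x0 \<in> W"
proof -
  note gs = U1n_p_struct[OF g]
  define k where "k = g $$ (n+1,n+1)"
  have kne: "k \<noteq> 0" using gs(2) k_def by simp
  define s where "s = u $ (n+1)"
  define w where "w = proj n u + (- s) \<cdot>\<^sub>v x0"
  have wW: "w \<in> W" using u(2) unfolding w_def s_def .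
  have wc: "w \<in> carrier_vec n" using cs_carrier[OF W wW] .
  have hw: "w $ i = u $ (i+1) - s * x0 $ i" if "i < n" for i
    using that x0 unfolding w_def proj_def by simp
  have "x0 = x0 + 0\<^sub>v n" using x0 by auto
  then have "x0 \<in> (\<lambda>w. x0 + w) ` W" using cs_zero[OF W] by blast
  then have "Gamma n g x0 \<in> (\<lambda>w. x0 + w) ` W" using pres by blast
  then obtain w1 where w1: "w1 \<in> W" "Gamma n g x0 = x0 + w1" by blast
  have "Gamma n g (x0 + w) \<in> (\<lambda>w. x0 + w) ` W" using pres wW by blast
  then obtain w2 where w2: "w2 \<in> W" "Gamma n g (x0 + w) = x0 + w2" by blast
  have w1c: "w1 \<in> carrier_vec n" using cs_carrier[OF W w1(1)] .
  have w2c: "w2 \<in> carrier_vec n" using cs_carrier[OF W w2(1)] .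
  define T where "T = (k * s) \<cdot>\<^sub>v w1 + k \<cdot>\<^sub>v (w2 + (-1) \<cdot>\<^sub>v w1)"
  have TW: "T \<in> W" unfolding T_def
    by (intro cs_add[OF W] cs_smult[OF W] w1 w2)
  have "proj n (g *\<^sub>v u) + (- (g *\<^sub>v u) $ (n+1)) \<cdot>\<^sub>v x0 = T"
  proof (rule eq_vecI)
    show "dim_vec (proj n (g *\<^sub>v u) + (- (g *\<^sub>v u) $ (n+1)) \<cdot>\<^sub>v x0) = dim_vec T"
      using x0 w1c w2c unfolding T_def by simp
    fix j assume "j < dim_vec T"
    then have j: "j < n" using w1c unfolding T_def by simp
    define A where "A = (\<Sum>i<n. g $$ (j+1,i+1) * x0 $ i)"
    define B where "B = (\<Sum>i<n. g $$ (j+1,i+1) * w $ i)"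
    define C where "C = g $$ (j+1,n+1)"
    have h1: "(A + C) / k = x0 $ j + w1 $ j"
      using Gamma_comp[OF gs(1) j, of x0] w1(2) j x0 w1c unfolding A_def C_def k_def by simp
    have "(\<Sum>i<n. g $$ (j+1,i+1) * (x0 + w) $ i) = A + B"
      using x0 wc unfolding A_def B_def by (simp add: sum.distrib algebra_simps)
    then have h2: "(A + B + C) / k = x0 $ j + w2 $ j"
      using Gamma_comp[OF gs(1) j, of "x0 + w"] w2(2) j x0 w2c unfolding C_def k_def by simp
    have "(g *\<^sub>v u) $ (j+1) = g $$ (j+1,0) * u $ 0 + (\<Sum>i<n. g $$ (j+1,i+1) * u $ (i+1)) + g $$ (j+1,n+1) * u $ (n+1)"
      by (rule mv_split[OF gs(1) u(1)]) (use j in simp)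
    also have "(\<Sum>i<n. g $$ (j+1,i+1) * u $ (i+1)) = (\<Sum>i<n. g $$ (j+1,i+1) * (w $ i + s * x0 $ i))"
      by (rule sum.cong) (auto simp: hw)
    also have "\<dots> = B + s * A"
      unfolding A_def B_def by (simp add: sum.distrib sum_distrib_left algebra_simps)
    finally have hu: "(g *\<^sub>v u) $ (j+1) = B + s * A + C * s"
      using gs(4)[OF j] unfolding C_def s_def by simp
    have hl: "(g *\<^sub>v u) $ (n+1) = k * s" using gs(3)[OF u(1)] unfolding k_def s_def .
    have e1: "A + C = k * (x0 $ j + w1 $ j)" using h1 kne by (simp add: field_simps)
    have e2: "A + B + C = k * (x0 $ j + w2 $ j)" using h2 kne by (simp add: field_simps)
    have "proj n (g *\<^sub>v u) $ j + (- (g *\<^sub>v u) $ (n+1)) * x0 $ j = B + s * A + C * s - k * s * x0 $ j"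
      using hu hl j gs(1) unfolding proj_def by simp
    also have "\<dots> = (k * s) * w1 $ j + k * (w2 $ j + (-1) * w1 $ j)"
    proof -
      have "B = (A + B + C) - (A + C)" by simp
      also have "\<dots> = k * (x0 $ j + w2 $ j) - k * (x0 $ j + w1 $ j)" using e1 e2 by simp
      finally have hB: "B = k * (x0 $ j + w2 $ j) - k * (x0 $ j + w1 $ j)" .
      have hA: "A = k * (x0 $ j + w1 $ j) - C" using e1 by (simp add: eq_diff_eq)
      show ?thesis by (simp only: hA hB) (simp add: algebra_simps)
    qed
    also have "\<dots> = T $ j" unfolding T_def using j w1c w2c by simp
    finally show "(proj n (g *\<^sub>v u) + (- (g *\<^sub>v u) $ (n+1)) \<cdot>\<^sub>v x0) $ j = T $ j"
      using j x0 unfolding proj_def by simp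
  qed
  with TW show ?thesis by simp
qed



lemma part1:
  assumes sub: "is_subgroup_of n G (U1n_p n)" and wi: "weakly_irreducible n G"
    and x0: "x0 \<in> carrier_vec n" and W: "complex_subspace n W" and Wne: "W \<noteq> carrier_vec n"
    and pres: "\<And>g. g \<in> G \<Longrightarrow> Gamma n g ` ((\<lambda>w. x0 + w) ` W) = (\<lambda>w. x0 + w) ` W"
  shows False
proof -
  define U where "U = {u \<in> carrier_vec (n+2). proj n u + (- u $ (n+1)) \<cdot>\<^sub>v x0 \<in> W}"
  have GU: "g \<in> U1n_p n" if "g \<in> G" for g using sub that unfolding is_subgroup_of_def by auto
  have Gc: "g \<in> carrier_mat (n+2) (n+2)" if "g \<in> G" for g using U1n_p_struct(1)[OF GU[OF that]] .
  have close: "g *\<^sub>v u \<in> U" if "g \<in> G" "u \<in> U" for g u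
    using close_U[OF GU[OF that(1)] x0 W pres[OF that(1)]] that Gc[OF that(1)] unfolding U_def by auto
  have presU: "preserves_lin G U"
    unfolding preserves_lin_def
  proof (intro ballI equalityI subsetI)
    fix g v assume g: "g \<in> G" and "v \<in> (\<lambda>w. g *\<^sub>v w) ` U"
    then show "v \<in> U" using close by auto
  next
    fix g v assume g: "g \<in> G" and v: "v \<in> U"
    obtain h where h: "h \<in> G" "g * h = 1\<^sub>m (n+2)" using sub g unfolding is_subgroup_of_def by auto
    have vc: "v \<in> carrier_vec (n+2)" using v unfolding U_def by auto
    have "g *\<^sub>v (h *\<^sub>v v) = (g * h) *\<^sub>v v" using Gc[OF g] Gc[OF h(1)] vc by simp
    also have "\<dots> = v" using h(2) vc by simp
    finally show "v \<in> (\<lambda>w. g *\<^sub>v w) ` U" using close[OF h(1) v] by (metis image_eqI)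
  qed
  have zW: "0\<^sub>v n \<in> W" using cs_zero[OF W] .
  have csU: "complex_subspace (n+2) U"
    unfolding complex_subspace_def
  proof (intro conjI ballI allI)
    show "U \<subseteq> carrier_vec (n+2)" unfolding U_def by auto
    have "proj n (0\<^sub>v (n+2)) + (- 0\<^sub>v (n+2) $ (n+1)) \<cdot>\<^sub>v x0 = 0\<^sub>v n"
      using x0 unfolding proj_def by auto
    then show "0\<^sub>v (n+2) \<in> U" using zW unfolding U_def by auto
  next
    fix u v assume u: "u \<in> U" and v: "v \<in> U"
    have "proj n (u + v) + (- (u + v) $ (n+1)) \<cdot>\<^sub>v x0 =
        (proj n u + (- u $ (n+1)) \<cdot>\<^sub>v x0) + (proj n v + (- v $ (n+1)) \<cdot>\<^sub>v x0)"
      using u v x0 unfolding U_def proj_def by (auto simp: algebra_simps)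
    then show "u + v \<in> U" using u v cs_add[OF W] unfolding U_def by auto
  next
    fix c :: complex and u assume u: "u \<in> U"
    have "proj n (c \<cdot>\<^sub>v u) + (- (c \<cdot>\<^sub>v u) $ (n+1)) \<cdot>\<^sub>v x0 =
        c \<cdot>\<^sub>v (proj n u + (- u $ (n+1)) \<cdot>\<^sub>v x0)"
      using u x0 unfolding U_def proj_def by (auto simp: algebra_simps)
    then show "c \<cdot>\<^sub>v u \<in> U" using u cs_smult[OF W] unfolding U_def by auto
  qed
  have pc: "pvec n \<in> carrier_vec (n+2)" unfolding pvec_def by simp
  have pU: "pvec n \<in> U"
  proof -
    have "proj n (pvec n) + (- pvec n $ (n+1)) \<cdot>\<^sub>v x0 = 0\<^sub>v n"
      using x0 unfolding proj_def pvec_def by auto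
    then show ?thesis using pc zW unfolding U_def by auto
  qed
  have ne0: "U \<noteq> {0\<^sub>v (n+2)}"
  proof
    assume "U = {0\<^sub>v (n+2)}"
    then have "pvec n = 0\<^sub>v (n+2)" using pU by auto
    then have "pvec n $ 0 = (0\<^sub>v (n+2) :: complex vec) $ 0" by simp
    then show False unfolding pvec_def by simp
  qed
  have iotaU: "iota n y \<in> U" if "y \<in> W" for y
  proof -
    have yc: "y \<in> carrier_vec n" using cs_carrier[OF W that] .
    have "proj n (iota n y) + (- iota n y $ (n+1)) \<cdot>\<^sub>v x0 = y"
      using x0 yc unfolding proj_def iota_def by auto
    then show ?thesis using that unfolding U_def iota_def by auto
  qed
  have neC: "U \<noteq> carrier_vec (n+2)"
  proof
    assume UC: "U = carrier_vec (n+2)"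
    have "carrier_vec n \<subseteq> W"
    proof
      fix y :: "complex vec" assume yc: "y \<in> carrier_vec n"
      have "iota n y \<in> U" unfolding UC iota_def by simp
      moreover have "proj n (iota n y) + (- iota n y $ (n+1)) \<cdot>\<^sub>v x0 = y"
        using x0 yc unfolding proj_def iota_def by auto
      ultimately show "y \<in> W" unfolding U_def by auto
    qed
    then show False using Wne W unfolding complex_subspace_def by auto
  qed
  have nd: "nondegenerate n U"
    unfolding nondegenerate_def
  proof (intro ballI impI)
    fix u assume u: "u \<in> U" and orth: "\<forall>v\<in>U. hform n u v = 0"
    have uc: "u \<in> carrier_vec (n+2)" using u unfolding U_def by auto
    have s0: "u $ (n+1) = 0" using orth pU hform_p1[of n u] by auto
    have "proj n u + (- u $ (n+1)) \<cdot>\<^sub>v x0 = proj n u" using s0 x0 unfolding proj_def by auto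
    then have puW: "proj n u \<in> W" using u unfolding U_def by auto
    have "hform n u (iota n (proj n u)) = (\<Sum>j\<in>{1..n}. u $ j * cnj (u $ j))"
      unfolding hform_def iota_def proj_def by (simp, intro sum.cong) auto
    then have sz: "(\<Sum>j\<in>{1..n}. u $ j * cnj (u $ j)) = 0" using orth iotaU[OF puW] by auto
    have mid: "u $ j = 0" if "j \<in> {1..n}" for j using sum_cnj_zero[OF _ sz that] by simp
    define e where "e = emb n x0"
    have ec: "e \<in> carrier_vec (n+2)" unfolding e_def emb_def by simp
    have "proj n e + (- e $ (n+1)) \<cdot>\<^sub>v x0 = 0\<^sub>v n" using x0 unfolding proj_def e_def emb_def by auto
    then have eU: "e \<in> U" using ec zW unfolding U_def by auto
    have "hform n u e = u $ 0 + (\<Sum>j\<in>{1..n}. u $ j * cnj (e $ j))"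
      unfolding hform_def e_def emb_def by (simp add: s0)
    also have "(\<Sum>j\<in>{1..n}. u $ j * cnj (e $ j)) = 0" by (rule sum.neutral) (auto simp: mid)
    finally have u0: "u $ 0 = 0" using orth eU by auto
    show "u = 0\<^sub>v (n+2)"
    proof (rule eq_vecI)
      fix i assume "i < dim_vec (0\<^sub>v (n+2) :: complex vec)"
      then have i: "i < n+2" by simp
      then consider "i = 0" | "i \<in> {1..n}" | "i = n+1" by fastforce
      then show "u $ i = 0\<^sub>v (n+2) $ i" using i u0 s0 mid by cases auto
    qed (use uc in auto)
  qed
  show False using wi csU ne0 neC nd presU unfolding weakly_irreducible_def by blast
qed



lemma Gamma_dimv: "M \<in> carrier_mat (n+2) (n+2) \<Longrightarrow> dim_vec (Gamma n M x) = n"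
  unfolding Gamma_def Let_def by simp

lemma Gamma_aff3:
  assumes M: "M \<in> carrier_mat (n+2) (n+2)"
    and xc: "x \<in> carrier_vec n" and yc: "y \<in> carrier_vec n" and zc: "z \<in> carrier_vec n"
    and abc: "a + b + c = 1"
  shows "Gamma n M (a \<cdot>\<^sub>v x + b \<cdot>\<^sub>v y + c \<cdot>\<^sub>v z) =
         a \<cdot>\<^sub>v Gamma n M x + b \<cdot>\<^sub>v Gamma n M y + c \<cdot>\<^sub>v Gamma n M z"
proof (rule eq_vecI)
  show "dim_vec (Gamma n M (a \<cdot>\<^sub>v x + b \<cdot>\<^sub>v y + c \<cdot>\<^sub>v z)) =
        dim_vec (a \<cdot>\<^sub>v Gamma n M x + b \<cdot>\<^sub>v Gamma n M y + c \<cdot>\<^sub>v Gamma n M z)"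
    using Gamma_dimv[OF M] by simp
  fix j assume "j < dim_vec (a \<cdot>\<^sub>v Gamma n M x + b \<cdot>\<^sub>v Gamma n M y + c \<cdot>\<^sub>v Gamma n M z)"
  then have j: "j < n" using Gamma_dimv[OF M] by simp
  define k where "k = M $$ (n+1,n+1)"
  define C where "C = M $$ (j+1,n+1)"
  define X where "X = (\<Sum>i<n. M $$ (j+1,i+1) * x $ i)"
  define Y where "Y = (\<Sum>i<n. M $$ (j+1,i+1) * y $ i)"
  define Z where "Z = (\<Sum>i<n. M $$ (j+1,i+1) * z $ i)"
  have "(\<Sum>i<n. M $$ (j+1,i+1) * (a \<cdot>\<^sub>v x + b \<cdot>\<^sub>v y + c \<cdot>\<^sub>v z) $ i) = a * X + b * Y + c * Z"
    using xc yc zc unfolding X_def Y_def Z_def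
    by (simp add: sum.distrib sum_distrib_left algebra_simps)
  then have "Gamma n M (a \<cdot>\<^sub>v x + b \<cdot>\<^sub>v y + c \<cdot>\<^sub>v z) $ j = (a * X + b * Y + c * Z + C) / k"
    using Gamma_comp[OF M j] unfolding C_def k_def by simp
  also have "\<dots> = (a * X + b * Y + c * Z + (a + b + c) * C) / k" using abc by simp
  also have "\<dots> = a * ((X + C) / k) + b * ((Y + C) / k) + c * ((Z + C) / k)"
    by (simp add: add_divide_distrib algebra_simps)
  also have "\<dots> = (a \<cdot>\<^sub>v Gamma n M x + b \<cdot>\<^sub>v Gamma n M y + c \<cdot>\<^sub>v Gamma n M z) $ j"
    using Gamma_comp[OF M j] Gamma_dimv[OF M] j unfolding X_def Y_def Z_def C_def k_def
    by simp
  finally show "Gamma n M (a \<cdot>\<^sub>v x + b \<cdot>\<^sub>v y + c \<cdot>\<^sub>v z) $ j =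
     (a \<cdot>\<^sub>v Gamma n M x + b \<cdot>\<^sub>v Gamma n M y + c \<cdot>\<^sub>v Gamma n M z) $ j" .
qed

lemma rs_add: "real_subspace m W \<Longrightarrow> u \<in> W \<Longrightarrow> v \<in> W \<Longrightarrow> u + v \<in> W"
  unfolding real_subspace_def by auto
lemma rs_smult: "real_subspace m W \<Longrightarrow> u \<in> W \<Longrightarrow> complex_of_real c \<cdot>\<^sub>v u \<in> W"
  unfolding real_subspace_def by auto
lemma rs_zero: "real_subspace m W \<Longrightarrow> 0\<^sub>v m \<in> W"
  unfolding real_subspace_def by auto
lemma rs_carrier: "real_subspace m W \<Longrightarrow> u \<in> W \<Longrightarrow> u \<in> carrier_vec m"
  unfolding real_subspace_def by auto

lemma cspan_sub:
  assumes V: "real_subspace n V"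
  shows "complex_subspace n {u + \<i> \<cdot>\<^sub>v v | u v. u \<in> V \<and> v \<in> V}"
  unfolding complex_subspace_def
proof (intro conjI ballI allI subsetI)
  fix x assume "x \<in> {u + \<i> \<cdot>\<^sub>v v | u v. u \<in> V \<and> v \<in> V}"
  then show "x \<in> carrier_vec n" using rs_carrier[OF V] by auto
next
  have "0\<^sub>v n = 0\<^sub>v n + \<i> \<cdot>\<^sub>v 0\<^sub>v n" by auto
  then show "0\<^sub>v n \<in> {u + \<i> \<cdot>\<^sub>v v | u v. u \<in> V \<and> v \<in> V}" using rs_zero[OF V] by blast
next
  fix x y assume "x \<in> {u + \<i> \<cdot>\<^sub>v v | u v. u \<in> V \<and> v \<in> V}" "y \<in> {u + \<i> \<cdot>\<^sub>v v | u v. u \<in> V \<and> v \<in> V}"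
  then obtain u1 v1 u2 v2 where h: "x = u1 + \<i> \<cdot>\<^sub>v v1" "y = u2 + \<i> \<cdot>\<^sub>v v2" "u1 \<in> V" "v1 \<in> V" "u2 \<in> V" "v2 \<in> V"
    by blast
  have c: "u1 \<in> carrier_vec n" "v1 \<in> carrier_vec n" "u2 \<in> carrier_vec n" "v2 \<in> carrier_vec n"
    using h rs_carrier[OF V] by auto
  have "x + y = (u1 + u2) + \<i> \<cdot>\<^sub>v (v1 + v2)"
    unfolding h(1,2) using c by (auto simp: algebra_simps)
  then show "x + y \<in> {u + \<i> \<cdot>\<^sub>v v | u v. u \<in> V \<and> v \<in> V}" using rs_add[OF V] h by blast
next
  fix c :: complex and x assume "x \<in> {u + \<i> \<cdot>\<^sub>v v | u v. u \<in> V \<and> v \<in> V}"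
  then obtain u v where h: "x = u + \<i> \<cdot>\<^sub>v v" "u \<in> V" "v \<in> V" by blast
  have cc: "u \<in> carrier_vec n" "v \<in> carrier_vec n" using h rs_carrier[OF V] by auto
  have "c \<cdot>\<^sub>v x = (complex_of_real (Re c) \<cdot>\<^sub>v u + complex_of_real (- Im c) \<cdot>\<^sub>v v)
      + \<i> \<cdot>\<^sub>v (complex_of_real (Im c) \<cdot>\<^sub>v u + complex_of_real (Re c) \<cdot>\<^sub>v v)"
    unfolding h(1) using cc by (auto simp: complex_eq_iff algebra_simps)
  then show "c \<cdot>\<^sub>v x \<in> {u + \<i> \<cdot>\<^sub>v v | u v. u \<in> V \<and> v \<in> V}"
    using rs_add[OF V] rs_smult[OF V] h by blast
qed



lemma part1':
  assumes sub: "is_subgroup_of n G (U1n_p n)" and wi: "weakly_irreducible n G"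
  shows "\<not> (\<exists>S. complex_affine n S \<and> S \<noteq> carrier_vec n \<and> preserves_aff (Gamma n ` G) S)"
proof
  assume "\<exists>S. complex_affine n S \<and> S \<noteq> carrier_vec n \<and> preserves_aff (Gamma n ` G) S"
  then obtain S where S: "complex_affine n S" "S \<noteq> carrier_vec n" "preserves_aff (Gamma n ` G) S" by blast
  then obtain x0 W where x0: "x0 \<in> carrier_vec n" and W: "complex_subspace n W"
    and SW: "S = (\<lambda>w. x0 + w) ` W" unfolding complex_affine_def by blast
  have Wne: "W \<noteq> carrier_vec n"
  proof
    assume WC: "W = carrier_vec n"
    have "carrier_vec n \<subseteq> S"
    proof
      fix y :: "complex vec" assume y: "y \<in> carrier_vec n"
      have "y = x0 + (y - x0)" using x0 y by auto
      moreover have "y - x0 \<in> W" using WC x0 y by auto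
      ultimately show "y \<in> S" unfolding SW by blast
    qed
    moreover have "S \<subseteq> carrier_vec n" unfolding SW using W x0 cs_carrier[OF W] by auto
    ultimately show False using S(2) by blast
  qed
  have pres: "Gamma n g ` ((\<lambda>w. x0 + w) ` W) = (\<lambda>w. x0 + w) ` W" if "g \<in> G" for g
    using S(3) that unfolding preserves_aff_def SW by blast
  show False using part1[OF sub wi x0 W Wne pres] by blast
qed

theorem main:
  fixes n :: nat and G :: "complex mat set"
  assumes sub: "is_subgroup_of n G (U1n_p n)"
    and wi: "weakly_irreducible n G"
  shows "\<not> (\<exists>S. complex_affine n S \<and> S \<noteq> carrier_vec n \<and> preserves_aff (Gamma n ` G) S)
    \<and> (\<forall>L. real_affine n L \<and> L \<noteq> carrier_vec n \<and> preserves_aff (Gamma n ` G) L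
            \<longrightarrow> complex_affine_hull n L = carrier_vec n)"
proof (intro conjI allI impI)
  show P1: "\<not> (\<exists>S. complex_affine n S \<and> S \<noteq> carrier_vec n \<and> preserves_aff (Gamma n ` G) S)"
    by (rule part1'[OF sub wi])
  fix L assume "real_affine n L \<and> L \<noteq> carrier_vec n \<and> preserves_aff (Gamma n ` G) L"
  then have La: "real_affine n L" and Lp: "preserves_aff (Gamma n ` G) L" by auto
  then obtain x0 V where x0: "x0 \<in> carrier_vec n" and V: "real_subspace n V"
    and LV: "L = (\<lambda>w. x0 + w) ` V" unfolding real_affine_def by blast
  define W where "W = {u + \<i> \<cdot>\<^sub>v v | u v. u \<in> V \<and> v \<in> V}"
  have W: "complex_subspace n W" unfolding W_def by (rule cspan_sub[OF V])
  define S0 where "S0 = (\<lambda>w. x0 + w) ` W"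
  have S0a: "complex_affine n S0" unfolding complex_affine_def S0_def using x0 W by blast
  have Vc: "v \<in> carrier_vec n" if "v \<in> V" for v using rs_carrier[OF V that] .
  have LS0: "L \<subseteq> S0"
  proof
    fix y assume "y \<in> L"
    then obtain v where v: "v \<in> V" "y = x0 + v" unfolding LV by blast
    have "v = v + \<i> \<cdot>\<^sub>v 0\<^sub>v n" using Vc[OF v(1)] by auto
    then have "v \<in> W" unfolding W_def using v(1) rs_zero[OF V] by blast
    then show "y \<in> S0" unfolding S0_def v(2) by blast
  qed
  have x0L: "x0 \<in> L"
  proof -
    have "x0 = x0 + 0\<^sub>v n" using x0 by auto
    then show ?thesis unfolding LV using rs_zero[OF V] by blast
  qed
  have hull: "complex_affine_hull n L = S0"
  proof
    show "complex_affine_hull n L \<subseteq> S0" unfolding complex_affine_hull_def using S0a LS0 by blast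
    show "S0 \<subseteq> complex_affine_hull n L" unfolding complex_affine_hull_def
    proof (intro Inter_greatest)
      fix S assume "S \<in> {S. complex_affine n S \<and> L \<subseteq> S}"
      then have Sa: "complex_affine n S" and LS: "L \<subseteq> S" by auto
      then obtain y0 V' where y0: "y0 \<in> carrier_vec n" and V': "complex_subspace n V'"
        and SV: "S = (\<lambda>w. y0 + w) ` V'" unfolding complex_affine_def by blast
      show "S0 \<subseteq> S"
      proof
        fix y assume "y \<in> S0"
        then obtain u v where uv: "u \<in> V" "v \<in> V" "y = x0 + (u + \<i> \<cdot>\<^sub>v v)"
          unfolding S0_def W_def by blast
        have "x0 \<in> S" using x0L LS by blast
        then obtain z where z: "z \<in> V'" "x0 = y0 + z" unfolding SV by blast
        have "x0 + u \<in> L" unfolding LV using uv by blast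
        then have "x0 + u \<in> S" using LS by blast
        then obtain a where a: "a \<in> V'" "x0 + u = y0 + a" unfolding SV by blast
        have "x0 + v \<in> L" unfolding LV using uv by blast
        then have "x0 + v \<in> S" using LS by blast
        then obtain b where b: "b \<in> V'" "x0 + v = y0 + b" unfolding SV by blast
        have cs: "u \<in> carrier_vec n" "v \<in> carrier_vec n" "a \<in> carrier_vec n" "b \<in> carrier_vec n"
          "z \<in> carrier_vec n" using uv Vc a b z cs_carrier[OF V'] by auto
        have "y = y0 + (a + (\<i> \<cdot>\<^sub>v b + (- \<i>) \<cdot>\<^sub>v z))"
        proof (rule eq_vecI)
          fix j assume "j < dim_vec (y0 + (a + (\<i> \<cdot>\<^sub>v b + (- \<i>) \<cdot>\<^sub>v z)))"
          then have j: "j < n" using cs by simp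
          have e1: "x0 $ j = y0 $ j + z $ j" using arg_cong[OF z(2), of "\<lambda>v. v $ j"] j cs by simp
          have e2: "x0 $ j + u $ j = y0 $ j + a $ j" using arg_cong[OF a(2), of "\<lambda>v. v $ j"] j cs x0 by simp
          have e3: "x0 $ j + v $ j = y0 $ j + b $ j" using arg_cong[OF b(2), of "\<lambda>v. v $ j"] j cs x0 by simp
          have "b $ j = v $ j + z $ j" using e1 e3 by (simp add: algebra_simps)
          moreover have "a $ j = x0 $ j + u $ j - y0 $ j" using e2 by simp
          ultimately show "y $ j = (y0 + (a + (\<i> \<cdot>\<^sub>v b + (- \<i>) \<cdot>\<^sub>v z))) $ j"
            using j cs x0 y0 uv(3) by (simp add: algebra_simps)
        qed (use uv cs x0 y0 in simp)
        moreover have "a + (\<i> \<cdot>\<^sub>v b + (- \<i>) \<cdot>\<^sub>v z) \<in> V'"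
          by (intro cs_add[OF V'] cs_smult[OF V'] a b z)
        ultimately show "y \<in> S" unfolding SV by blast
      qed
    qed
  qed
  have GU: "g \<in> U1n_p n" if "g \<in> G" for g using sub that unfolding is_subgroup_of_def by auto
  have Gc: "g \<in> carrier_mat (n+2) (n+2)" if "g \<in> G" for g using U1n_p_struct(1)[OF GU[OF that]] .
  have presL: "Gamma n g ` L = L" if "g \<in> G" for g using Lp that unfolding preserves_aff_def by blast
  have inL: "x0 + w \<in> L" if "w \<in> V" for w unfolding LV using that by (rule imageI)
  have presS0: "Gamma n g ` S0 = S0" if g: "g \<in> G" for g
  proof (intro equalityI subsetI)
    have GL: "Gamma n g w \<in> L" if "w \<in> L" for w
    proof -
      have "Gamma n g w \<in> Gamma n g ` L" using that by (rule imageI)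
      then show ?thesis unfolding presL[OF g] .
    qed
    fix y assume "y \<in> Gamma n g ` S0"
    then obtain x where x: "x \<in> S0" "y = Gamma n g x" by blast
    then obtain u v where uv: "u \<in> V" "v \<in> V" "x = x0 + (u + \<i> \<cdot>\<^sub>v v)"
      unfolding S0_def W_def by blast
    have uc: "u \<in> carrier_vec n" and vc: "v \<in> carrier_vec n" using uv Vc by auto
    have "x = 1 \<cdot>\<^sub>v (x0 + u) + \<i> \<cdot>\<^sub>v (x0 + v) + (- \<i>) \<cdot>\<^sub>v x0"
      using uv(3) uc vc x0 by (intro eq_vecI) (auto simp: algebra_simps)
    then have y1: "y = 1 \<cdot>\<^sub>v Gamma n g (x0 + u) + \<i> \<cdot>\<^sub>v Gamma n g (x0 + v) + (- \<i>) \<cdot>\<^sub>v Gamma n g x0"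
      using x(2) Gamma_aff3[OF Gc[OF g], of "x0 + u" "x0 + v" x0 1 \<i> "- \<i>"] uc vc x0 by simp
    have "Gamma n g (x0 + u) \<in> L" using GL[OF inL[OF uv(1)]] .
    then obtain a where a: "a \<in> V" "Gamma n g (x0 + u) = x0 + a" unfolding LV by blast
    have "Gamma n g (x0 + v) \<in> L" using GL[OF inL[OF uv(2)]] .
    then obtain b where b: "b \<in> V" "Gamma n g (x0 + v) = x0 + b" unfolding LV by blast
    have "Gamma n g x0 \<in> L" using GL[OF x0L] .
    then obtain d where d: "d \<in> V" "Gamma n g x0 = x0 + d" unfolding LV by blast
    have "y = 1 \<cdot>\<^sub>v (x0 + a) + \<i> \<cdot>\<^sub>v (x0 + b) + (- \<i>) \<cdot>\<^sub>v (x0 + d)"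
      unfolding y1 a(2) b(2) d(2) ..
    also have "\<dots> = x0 + (a + \<i> \<cdot>\<^sub>v (b + complex_of_real (-1) \<cdot>\<^sub>v d))"
      using Vc[OF a(1)] Vc[OF b(1)] Vc[OF d(1)] x0 by (intro eq_vecI) (auto simp: algebra_simps)
    finally have "y = x0 + (a + \<i> \<cdot>\<^sub>v (b + complex_of_real (-1) \<cdot>\<^sub>v d))" .
    moreover have "a + \<i> \<cdot>\<^sub>v (b + complex_of_real (-1) \<cdot>\<^sub>v d) \<in> W"
      unfolding W_def using a(1) b(1) d(1) rs_add[OF V] rs_smult[OF V] by blast
    ultimately show "y \<in> S0" unfolding S0_def by (rule image_eqI)
  next
    have LG: "w \<in> Gamma n g ` L" if "w \<in> L" for w using that unfolding presL[OF g] .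
    fix y assume "y \<in> S0"
    then obtain u v where uv: "u \<in> V" "v \<in> V" "y = x0 + (u + \<i> \<cdot>\<^sub>v v)"
      unfolding S0_def W_def by blast
    obtain a' where a': "a' \<in> L" "x0 = Gamma n g a'" using LG[OF x0L] by blast
    then obtain a where a: "a \<in> V" "x0 = Gamma n g (x0 + a)" unfolding LV by blast
    obtain b' where b': "b' \<in> L" "x0 + u = Gamma n g b'" using LG[OF inL[OF uv(1)]] by blast
    then obtain b where b: "b \<in> V" "x0 + u = Gamma n g (x0 + b)" unfolding LV by blast
    obtain d' where d': "d' \<in> L" "x0 + v = Gamma n g d'" using LG[OF inL[OF uv(2)]] by blast
    then obtain d where d: "d \<in> V" "x0 + v = Gamma n g (x0 + d)" unfolding LV by blast
    define z where "z = 1 \<cdot>\<^sub>v (x0 + b) + \<i> \<cdot>\<^sub>v (x0 + d) + (- \<i>) \<cdot>\<^sub>v (x0 + a)"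
    have "Gamma n g z = 1 \<cdot>\<^sub>v Gamma n g (x0 + b) + \<i> \<cdot>\<^sub>v Gamma n g (x0 + d) + (- \<i>) \<cdot>\<^sub>v Gamma n g (x0 + a)"
      unfolding z_def
      by (rule Gamma_aff3[OF Gc[OF g]]) (use Vc[OF a(1)] Vc[OF b(1)] Vc[OF d(1)] x0 in auto)
    also have "\<dots> = 1 \<cdot>\<^sub>v (x0 + u) + \<i> \<cdot>\<^sub>v (x0 + v) + (- \<i>) \<cdot>\<^sub>v x0"
      unfolding a(2)[symmetric] b(2)[symmetric] d(2)[symmetric] ..
    also have "\<dots> = y" using uv(3) Vc[OF uv(1)] Vc[OF uv(2)] x0 by (intro eq_vecI) (auto simp: algebra_simps)
    finally have zy: "Gamma n g z = y" .
    have "z = x0 + (b + \<i> \<cdot>\<^sub>v (d + complex_of_real (-1) \<cdot>\<^sub>v a))"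
      unfolding z_def using Vc[OF a(1)] Vc[OF b(1)] Vc[OF d(1)] x0 by (intro eq_vecI) (auto simp: algebra_simps)
    moreover have "b + \<i> \<cdot>\<^sub>v (d + complex_of_real (-1) \<cdot>\<^sub>v a) \<in> W"
      unfolding W_def using a(1) b(1) d(1) rs_add[OF V] rs_smult[OF V] by blast
    ultimately have "z \<in> S0" unfolding S0_def by (rule image_eqI)
    then show "y \<in> Gamma n g ` S0" unfolding zy[symmetric] by (rule imageI)
  qed
  have "preserves_aff (Gamma n ` G) S0" unfolding preserves_aff_def using presS0 by blast
  then have "S0 = carrier_vec n" using P1 S0a by blast
  then show "complex_affine_hull n L = carrier_vec n" using hull by simp
qed


theorem mainTheorem3:
  fixes n :: nat and G :: "complex mat set"
  assumes "is_subgroup_of n G (U1n_p n)"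
    and "weakly_irreducible n G"
  shows "\<not> (\<exists>S. complex_affine n S \<and> S \<noteq> carrier_vec n \<and> preserves_aff (Gamma n ` G) S)
    \<and> (\<forall>L. real_affine n L \<and> L \<noteq> carrier_vec n \<and> preserves_aff (Gamma n ` G) L
            \<longrightarrow> complex_affine_hull n L = carrier_vec n)"
  by (rule main[OF assms])

end
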